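(* Given $A_7,A_8\in\mathbb R$, there exist $\gamma_2,\gamma_3\in C^\infty([-1,1])$ such that \[ \gamma_2(t)=\begin{cases}-\frac12A_7^2t & t\ge\frac34\\ -\frac12A_8^2t & t\le-\frac34\end{cases},\qquad \gamma_3(t)=\begin{cases}A_7t & t\ge\frac34\\ A_8t & t\le-\frac34\end{cases}, \] and $2\gamma_2'+(\gamma_3')^2=0$ on $[-1,1]$. *)

theory Defs
  imports "HOL-Analysis.Analysis"
begin

text \<open>C-infinity on a set S (for S a closed interval, derivatives at the endpoints are
one-sided): there is a sequence of successive derivatives, each taken within S.\<close>
definition C_infinity_on :: "real set \<Rightarrow> (real \<Rightarrow> real) \<Rightarrow> bool" where
  "C_infinity_on S f \<longleftrightarrow>
     (\<exists>D :: nat \<Rightarrow> real \<Rightarrow> real. D 0 = f \<and>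
        (\<forall>n. \<forall>x\<in>S. (D n has_real_derivative D (Suc n) x) (at x within S)))"

end

theory Submission
  imports Defs "HOL-Computational_Algebra.Polynomial"
begin

definition smooth :: "(real \<Rightarrow> real) \<Rightarrow> bool" where
  "smooth f \<longleftrightarrow> (\<exists>D. D 0 = f \<and> (\<forall>n x. (D n has_real_derivative D (Suc n) x) (at x)))"

lemma smooth_coinduct:
  assumes "X f" and step: "\<And>h. X h \<Longrightarrow> \<exists>h'. (\<forall>x. (h has_real_derivative h' x) (at x)) \<and> X h'"
  shows "smooth f"
proof -
  have "\<forall>h. \<exists>h'. X h \<longrightarrow> (\<forall>x. (h has_real_derivative h' x) (at x)) \<and> X h'" using step by blast
  then obtain S where S: "\<And>h. X h \<Longrightarrow> (\<forall>x. (h has_real_derivative S h x) (at x)) \<and> X (S h)" by metis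
  define D where "D n = (S ^^ n) f" for n
  have X: "X (D n)" for n by (induction n) (auto simp: D_def assms(1) S)
  have "(D n has_real_derivative D (Suc n) x) (at x)" for n x
    using S[OF X[of n]] by (simp add: D_def)
  then show ?thesis unfolding smooth_def by (intro exI[of _ D]) (auto simp: D_def)
qed

lemma smooth_D:
  assumes "smooth f" shows "\<exists>f'. (\<forall>x. (f has_real_derivative f' x) (at x)) \<and> smooth f'"
proof -
  from assms obtain D where D: "D 0 = f" "\<And>n x. (D n has_real_derivative D (Suc n) x) (at x)"
    unfolding smooth_def by blast
  have "smooth (D (Suc 0))" unfolding smooth_def
    by (rule exI[of _ "\<lambda>n. D (Suc n)"]) (use D in auto)
  then show ?thesis using D by metis
qed

lemma smooth_cont: "smooth f \<Longrightarrow> continuous_on S f"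
  by (meson DERIV_isCont continuous_at_imp_continuous_on smooth_D)

lemma smooth_const: "smooth (\<lambda>x. c)"
  by (rule smooth_coinduct[where X="\<lambda>h. \<exists>c. h = (\<lambda>x. c)"]) (auto intro!: exI[of _ "\<lambda>x. 0"])

lemma smooth_id: "smooth (\<lambda>x. x)"
proof (rule smooth_coinduct[where X="\<lambda>h. h = (\<lambda>x. x) \<or> (\<exists>c. h = (\<lambda>x. c))"])
  fix h :: "real \<Rightarrow> real" assume "h = (\<lambda>x. x) \<or> (\<exists>c. h = (\<lambda>x. c))"
  then show "\<exists>h'. (\<forall>x. (h has_real_derivative h' x) (at x)) \<and> (h' = (\<lambda>x. x) \<or> (\<exists>c. h' = (\<lambda>x. c)))"
  proof
    assume "h = (\<lambda>x. x)" then show ?thesis by (intro exI[of _ "\<lambda>x. 1"]) auto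
  next
    assume "\<exists>c. h = (\<lambda>x. c)" then show ?thesis by (intro exI[of _ "\<lambda>x. 0"]) auto
  qed
qed simp

lemma smooth_add: assumes "smooth a" "smooth b" shows "smooth (\<lambda>x. a x + b x)"
proof (rule smooth_coinduct[where X="\<lambda>h. \<exists>a b. smooth a \<and> smooth b \<and> h = (\<lambda>x. a x + b x)"])
  fix h assume "\<exists>a b. smooth a \<and> smooth b \<and> h = (\<lambda>x. a x + b x)"
  then obtain a b where h: "smooth a" "smooth b" "h = (\<lambda>x. a x + b x)" by blast
  obtain a' where a': "\<forall>x. (a has_real_derivative a' x) (at x)" "smooth a'" using smooth_D[OF h(1)] by blast
  obtain b' where b': "\<forall>x. (b has_real_derivative b' x) (at x)" "smooth b'" using smooth_D[OF h(2)] by blast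
  show "\<exists>h'. (\<forall>x. (h has_real_derivative h' x) (at x)) \<and> (\<exists>a b. smooth a \<and> smooth b \<and> h' = (\<lambda>x. a x + b x))"
    by (rule exI[of _ "\<lambda>x. a' x + b' x"]) (use a' b' h in \<open>auto intro!: DERIV_add\<close>)
qed (use assms in auto)

lemma smooth_prod_aux:
  "\<forall>(a,b)\<in>set ps. smooth a \<and> smooth b \<Longrightarrow> \<exists>ps'. (\<forall>(a,b)\<in>set ps'. smooth a \<and> smooth b) \<and>
     (\<forall>x. ((\<lambda>x. \<Sum>(a,b)\<leftarrow>ps. a x * b x) has_real_derivative (\<Sum>(a,b)\<leftarrow>ps'. a x * b x)) (at x))"
proof (induction ps)
  case Nil then show ?case by (intro exI[of _ "[]"]) auto
next
  case (Cons ab ps)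
  obtain a b where ab: "ab = (a,b)" by fastforce
  from Cons obtain ps' where ps': "\<forall>(a,b)\<in>set ps'. smooth a \<and> smooth b"
     "\<forall>x. ((\<lambda>x. \<Sum>(a,b)\<leftarrow>ps. a x * b x) has_real_derivative (\<Sum>(a,b)\<leftarrow>ps'. a x * b x)) (at x)"
    by auto
  have sa: "smooth a" and sb: "smooth b" using Cons.prems ab by auto
  obtain a' where a': "\<forall>x. (a has_real_derivative a' x) (at x)" "smooth a'" using smooth_D[OF sa] by blast
  obtain b' where b': "\<forall>x. (b has_real_derivative b' x) (at x)" "smooth b'" using smooth_D[OF sb] by blast
  have d: "((\<lambda>x. a x * b x + (\<Sum>(a,b)\<leftarrow>ps. a x * b x)) has_real_derivative (a' x * b x + a x * b' x + (\<Sum>(a,b)\<leftarrow>ps'. a x * b x))) (at x)" for x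
    using DERIV_add[OF DERIV_mult[OF a'(1)[rule_format] b'(1)[rule_format]] ps'(2)[rule_format]]
    by (simp add: algebra_simps)
  show ?case
    apply (rule exI[of _ "(a',b)#(a,b')#ps'"])
    using ps' a' b' sa sb ab d
    by (simp add: add.assoc)
qed

lemma smooth_mult: assumes "smooth a" "smooth b" shows "smooth (\<lambda>x. a x * b x)"
proof (rule smooth_coinduct[where X="\<lambda>h. \<exists>ps. (\<forall>(a,b)\<in>set ps. smooth a \<and> smooth b) \<and> h = (\<lambda>x. \<Sum>(a,b)\<leftarrow>ps. a x * b x)"])
  show "\<exists>ps. (\<forall>(a,b)\<in>set ps. smooth a \<and> smooth b) \<and> (\<lambda>x. a x * b x) = (\<lambda>x. \<Sum>(a,b)\<leftarrow>ps. a x * b x)"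
    by (rule exI[of _ "[(a,b)]"]) (use assms in auto)
next
  fix h assume "\<exists>ps. (\<forall>(a,b)\<in>set ps. smooth a \<and> smooth b) \<and> h = (\<lambda>x. \<Sum>(a,b)\<leftarrow>ps. a x * b x)"
  then obtain ps where ps: "\<forall>(a,b)\<in>set ps. smooth a \<and> smooth b" and h: "h = (\<lambda>x. \<Sum>(a,b)\<leftarrow>ps. a x * b x)" by blast
  obtain ps' where ps': "\<forall>(a,b)\<in>set ps'. smooth a \<and> smooth b"
     "\<forall>x. ((\<lambda>x. \<Sum>(a,b)\<leftarrow>ps. a x * b x) has_real_derivative (\<Sum>(a,b)\<leftarrow>ps'. a x * b x)) (at x)"
    using smooth_prod_aux[OF ps] by blast
  show "\<exists>h'. (\<forall>x. (h has_real_derivative h' x) (at x)) \<and> (\<exists>ps. (\<forall>(a,b)\<in>set ps. smooth a \<and> smooth b) \<and> h' = (\<lambda>x. \<Sum>(a,b)\<leftarrow>ps. a x * b x))"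
    by (rule exI[of _ "\<lambda>x. \<Sum>(a,b)\<leftarrow>ps'. a x * b x"]) (use ps' h in auto)
qed

lemma smooth_cmult: "smooth a \<Longrightarrow> smooth (\<lambda>x. c * a x)"
  using smooth_mult[OF smooth_const] by blast

lemma smooth_diff: assumes "smooth a" "smooth b" shows "smooth (\<lambda>x. a x - b x)"
  using smooth_add[OF assms(1) smooth_cmult[OF assms(2), of "-1"]] by simp

lemma smooth_affine: assumes "smooth a" shows "smooth (\<lambda>x. a (c * x + e))"
proof (rule smooth_coinduct[where X="\<lambda>h. \<exists>a k. smooth a \<and> h = (\<lambda>x. k * a (c * x + e))"])
  show "\<exists>a' k. smooth a' \<and> (\<lambda>x. a (c * x + e)) = (\<lambda>x. k * a' (c * x + e))"
    using assms by (intro exI[of _ a] exI[of _ 1]) auto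
next
  fix h assume "\<exists>a k. smooth a \<and> h = (\<lambda>x. k * a (c * x + e))"
  then obtain a k where h: "smooth a" "h = (\<lambda>x. k * a (c * x + e))" by blast
  obtain a' where a': "\<forall>x. (a has_real_derivative a' x) (at x)" "smooth a'" using smooth_D[OF h(1)] by blast
  have "((\<lambda>x. k * a (c * x + e)) has_real_derivative (k*c) * a' (c*x+e)) (at x)" for x
  proof -
    have "((\<lambda>x. a (c * x + e)) has_real_derivative a' (c*x+e) * c) (at x)"
      by (rule DERIV_chain2[OF a'(1)[rule_format]]) (auto intro!: derivative_eq_intros)
    from DERIV_cmult[OF this, of k] show ?thesis by (simp add: algebra_simps)
  qed
  then show "\<exists>h'. (\<forall>x. (h has_real_derivative h' x) (at x)) \<and> (\<exists>a k. smooth a \<and> h' = (\<lambda>x. k * a (c * x + e)))"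
    using h a' by (intro exI[of _ "\<lambda>x. (k*c) * a' (c*x+e)"] conjI exI[of _ a'] exI[of _ "k*c"]) auto
qed


lemma smooth_inv_aux:
  assumes H: "\<forall>x. (H has_real_derivative H' x) (at x)" "smooth H'" "\<And>x. H x > 0"
  shows "\<forall>(a,k)\<in>set ps. smooth a \<Longrightarrow> \<exists>ps'. (\<forall>(a,k)\<in>set ps'. smooth a) \<and>
     (\<forall>x. ((\<lambda>x. \<Sum>(a,k)\<leftarrow>ps. a x * (1 / H x)^k) has_real_derivative (\<Sum>(a,k)\<leftarrow>ps'. a x * (1 / H x)^k)) (at x))"
proof (induction ps)
  case Nil then show ?case by (intro exI[of _ "[]"]) auto
next
  case (Cons ak ps)
  obtain a k where ak: "ak = (a,k)" by fastforce
  from Cons obtain ps' where ps': "\<forall>(a,k)\<in>set ps'. smooth a"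
     "\<forall>x. ((\<lambda>x. \<Sum>(a,k)\<leftarrow>ps. a x * (1 / H x)^k) has_real_derivative (\<Sum>(a,k)\<leftarrow>ps'. a x * (1 / H x)^k)) (at x)"
    by auto
  have sa: "smooth a" using Cons.prems ak by auto
  obtain a' where a': "\<forall>x. (a has_real_derivative a' x) (at x)" "smooth a'" using smooth_D[OF sa] by blast
  define b where "b x = - real k * a x * H' x" for x
  have sb: "smooth b" unfolding b_def by (intro smooth_mult smooth_cmult sa H)
  have dr: "((\<lambda>x. 1 / H x) has_real_derivative - H' x / (H x)^2) (at x)" for x
    using DERIV_divide[OF DERIV_const[of 1] H(1)[rule_format, of x]] H(3)[of x]
    by (simp add: power2_eq_square)
  have dk: "((\<lambda>x. a x * (1 / H x)^k) has_real_derivative a' x * (1 / H x)^k + b x * (1 / H x)^(Suc k)) (at x)" for x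
  proof -
    have dm: "((\<lambda>x. a x * (1 / H x)^k) has_real_derivative a' x * (1 / H x)^k + (real k * (- H' x / (H x)^2 * (1 / H x)^(k - Suc 0))) * a x) (at x)"
      by (rule DERIV_mult[OF a'(1)[rule_format] DERIV_power[OF dr]])
    have eq: "a' x * (1 / H x)^k + (real k * (- H' x / (H x)^2 * (1 / H x)^(k - Suc 0))) * a x
       = a' x * (1 / H x)^k + b x * (1 / H x)^(Suc k)"
    proof (cases k)
      case 0 then show ?thesis by (simp add: b_def)
    next
      case (Suc j)
      have "H x \<noteq> 0" using H(3)[of x] by simp
      then show ?thesis using Suc by (simp add: b_def field_simps power2_eq_square)
    qed
    show ?thesis using dm unfolding eq .
  qed
  have d: "((\<lambda>x. a x * (1 / H x)^k + (\<Sum>(a,k)\<leftarrow>ps. a x * (1 / H x)^k)) has_real_derivative (a' x * (1 / H x)^k + b x * (1 / H x)^(Suc k) + (\<Sum>(a,k)\<leftarrow>ps'. a x * (1 / H x)^k))) (at x)" for x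
    using DERIV_add[OF dk ps'(2)[rule_format]] by simp
  show ?case
    apply (rule exI[of _ "(a',k)#(b, Suc k)#ps'"])
    using ps' a' sa sb ak d
    by (simp add: add.assoc)
qed

lemma smooth_inverse: assumes "smooth H" "\<And>x. H x > 0" shows "smooth (\<lambda>x. 1 / H x)"
proof -
  obtain H' where H': "\<forall>x. (H has_real_derivative H' x) (at x)" "smooth H'" using smooth_D[OF assms(1)] by blast
  show ?thesis
  proof (rule smooth_coinduct[where X="\<lambda>h. \<exists>ps. (\<forall>(a,k)\<in>set ps. smooth a) \<and> h = (\<lambda>x. \<Sum>(a,k)\<leftarrow>ps. a x * (1 / H x)^k)"])
    show "\<exists>ps. (\<forall>(a,k)\<in>set ps. smooth a) \<and> (\<lambda>x. 1 / H x) = (\<lambda>x. \<Sum>(a,k)\<leftarrow>ps. a x * (1 / H x)^k)"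
      by (rule exI[of _ "[(\<lambda>x. 1, 1)]"]) (auto intro: smooth_const)
  next
    fix h assume "\<exists>ps. (\<forall>(a,k)\<in>set ps. smooth a) \<and> h = (\<lambda>x. \<Sum>(a,k)\<leftarrow>ps. a x * (1 / H x)^k)"
    then obtain ps where ps: "\<forall>(a,k)\<in>set ps. smooth a" and h: "h = (\<lambda>x. \<Sum>(a,k)\<leftarrow>ps. a x * (1 / H x)^k)" by blast
    obtain ps' where ps': "\<forall>(a,k)\<in>set ps'. smooth a"
     "\<forall>x. ((\<lambda>x. \<Sum>(a,k)\<leftarrow>ps. a x * (1 / H x)^k) has_real_derivative (\<Sum>(a,k)\<leftarrow>ps'. a x * (1 / H x)^k)) (at x)"
      using smooth_inv_aux[OF H' assms(2) ps] by blast
    show "\<exists>h'. (\<forall>x. (h has_real_derivative h' x) (at x)) \<and> (\<exists>ps. (\<forall>(a,k)\<in>set ps. smooth a) \<and> h' = (\<lambda>x. \<Sum>(a,k)\<leftarrow>ps. a x * (1 / H x)^k))"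
      by (rule exI[of _ "\<lambda>x. \<Sum>(a,k)\<leftarrow>ps'. a x * (1 / H x)^k"]) (use ps' h in auto)
  qed
qed

lemma smooth_divide: "smooth a \<Longrightarrow> smooth H \<Longrightarrow> (\<And>x. H x > 0) \<Longrightarrow> smooth (\<lambda>x. a x / H x)"
  using smooth_mult[OF _ smooth_inverse, of a H] by simp


definition hp :: "real poly \<Rightarrow> real \<Rightarrow> real" where
  "hp p x = (if 0 < x then poly p (1/x) * exp(-1/x) else 0)"
definition nxt :: "real poly \<Rightarrow> real poly" where
  "nxt p = monom 1 2 * (p - pderiv p)"

lemma lim_poly_exp: "((\<lambda>x::real. poly q x * exp(-x)) \<longlongrightarrow> 0) at_top"
proof -
  have eq: "poly q x * exp(-x) = (\<Sum>i\<le>degree q. coeff q i * (x^i / exp x))" for x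
    by (simp add: poly_altdef exp_minus divide_inverse sum_distrib_right mult.assoc)
  have "((\<lambda>x. \<Sum>i\<le>degree q. coeff q i * (x^i / exp x)) \<longlongrightarrow> 0) at_top"
    by (intro tendsto_null_sum tendsto_mult_right_zero tendsto_power_div_exp_0)
  then show ?thesis by (simp only: eq)
qed

lemma hp_deriv0: "(hp p has_real_derivative 0) (at 0)"
  unfolding has_field_derivative_iff
proof (rule filterlim_split_at)
  have "eventually (\<lambda>y. (hp p y - hp p 0) / (y - 0) = 0) (at_left (0::real))"
    unfolding eventually_at_left_field by (rule exI[of _ "-1"]) (auto simp: hp_def)
  then show "((\<lambda>y. (hp p y - hp p 0) / (y - 0)) \<longlongrightarrow> 0) (at_left 0)"
    by (rule tendsto_eventually)
next
  have ev: "eventually (\<lambda>x. poly (pCons 0 p) x * exp(-x) = (hp p (inverse x) - hp p 0) / (inverse x - 0)) at_top"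
    using eventually_gt_at_top[of "0::real"]
    by eventually_elim (auto simp: hp_def field_simps)
  have "((\<lambda>x. (hp p (inverse x) - hp p 0) / (inverse x - 0)) \<longlongrightarrow> 0) at_top"
    by (rule Lim_transform_eventually[OF lim_poly_exp ev])
  then show "((\<lambda>y. (hp p y - hp p 0) / (y - 0)) \<longlongrightarrow> 0) (at_right 0)"
    unfolding filterlim_at_right_to_top .
qed

lemma poly_nxt: "poly (nxt p) u = u^2 * (poly p u - poly (pderiv p) u)"
  by (simp add: nxt_def poly_monom)

lemma hp_deriv_pos:
  assumes x: "x > 0"
  shows "(hp p has_real_derivative hp (nxt p) x) (at x)"
proof -
  have dinv: "((\<lambda>y. 1/y) has_real_derivative - (1/x^2)) (at x)"
    using DERIV_inverse[of x UNIV] x by (simp add: inverse_eq_divide power2_eq_square)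
  have dinv': "((\<lambda>y. -1/y) has_real_derivative (1/x^2)) (at x)"
    using DERIV_minus[OF dinv] by simp
  have d1: "((\<lambda>y. poly p (1/y)) has_real_derivative poly (pderiv p) (1/x) * - (1/x^2)) (at x)"
    by (rule DERIV_chain2[OF poly_DERIV dinv])
  have d2: "((\<lambda>y. exp (-1/y)) has_real_derivative exp (-1/x) * (1/x^2)) (at x)"
    by (rule DERIV_chain2[OF DERIV_exp dinv'])
  have d: "((\<lambda>y. poly p (1/y) * exp(-1/y)) has_real_derivative hp (nxt p) x) (at x)"
  proof -
    have "hp (nxt p) x = poly (pderiv p) (1/x) * - (1/x^2) * exp(-1/x) + exp (-1/x) * (1/x^2) * poly p (1/x)"
      using x by (simp add: hp_def poly_nxt field_simps power2_eq_square)
    then show ?thesis using DERIV_mult[OF d1 d2] by simp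
  qed
  show ?thesis
    by (rule has_field_derivative_transform_within_open[OF d, of "{0<..}"]) (use x in \<open>auto simp: hp_def\<close>)
qed

lemma hp_deriv_neg:
  assumes x: "x < 0"
  shows "(hp p has_real_derivative hp (nxt p) x) (at x)"
proof -
  have e: "hp (nxt p) x = 0" using x by (simp add: hp_def)
  show ?thesis unfolding e
    by (intro has_field_derivative_transform_within_open[OF DERIV_const[of 0], of "{..<0}"]) (use x in \<open>auto simp: hp_def\<close>)
qed

lemma hp_deriv: "(hp p has_real_derivative hp (nxt p) x) (at x)"
proof -
  consider "x > 0" | "x = 0" | "x < 0" by linarith
  then show ?thesis
  proof cases
    case 2 then show ?thesis using hp_deriv0[of p] by (simp add: hp_def)
  qed (auto intro: hp_deriv_pos hp_deriv_neg)
qed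

lemma smooth_hp: "smooth (hp p)"
proof (rule smooth_coinduct[where X="\<lambda>h. \<exists>p. h = hp p"])
  fix h assume "\<exists>p. h = hp p"
  then obtain q where "h = hp q" by blast
  then show "\<exists>h'. (\<forall>x. (h has_real_derivative h' x) (at x)) \<and> (\<exists>p. h' = hp p)"
    by (intro exI[of _ "hp (nxt q)"]) (auto intro: hp_deriv)
qed auto

definition E :: "real \<Rightarrow> real" where "E = hp 1"

lemma smooth_E: "smooth E" unfolding E_def by (rule smooth_hp)
lemma E_nonpos: "x \<le> 0 \<Longrightarrow> E x = 0" by (simp add: E_def hp_def)
lemma E_pos: "x > 0 \<Longrightarrow> E x > 0" by (simp add: E_def hp_def)
lemma E_nonneg: "E x \<ge> 0" by (simp add: E_def hp_def)


definition P :: "real \<Rightarrow> real" where "P t = E (t - 1/2) / (E (t - 1/2) + E (3/4 - t))"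
definition sg :: "real \<Rightarrow> real" where "sg t = P t - P (-t)"
definition bb :: "real \<Rightarrow> real" where "bb t = E t * E (1/2 - t)"
definition bt :: "real \<Rightarrow> real" where "bt t = bb t - bb (-t)"

lemma smooth_E_aff: "smooth (\<lambda>t. E (c * t + e))"
  by (rule smooth_affine[OF smooth_E])

lemma P_den_pos: "E (t - 1/2) + E (3/4 - t) > 0"
proof (cases "t > 1/2")
  case True then show ?thesis using E_pos[of "t - 1/2"] E_nonneg[of "3/4 - t"] by simp
next
  case False then show ?thesis using E_pos[of "3/4 - t"] E_nonneg[of "t - 1/2"] by simp
qed

lemma smooth_P: "smooth P"
proof -
  have a: "smooth (\<lambda>t. E (t - 1/2))" using smooth_E_aff[of 1 "-1/2"] by simp
  have b: "smooth (\<lambda>t. E (3/4 - t))" using smooth_E_aff[of "-1" "3/4"] by simp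
  show ?thesis unfolding P_def[abs_def]
    by (rule smooth_divide[OF a smooth_add[OF a b] P_den_pos])
qed

lemma smooth_sg: "smooth sg"
proof -
  have "smooth (\<lambda>t. P (-t))" using smooth_affine[OF smooth_P, of "-1" 0] by simp
  then show ?thesis unfolding sg_def[abs_def] by (rule smooth_diff[OF smooth_P])
qed

lemma smooth_bt: "smooth bt"
proof -
  have a: "smooth (\<lambda>t. E (1/2 - t))" using smooth_E_aff[of "-1" "1/2"] by simp
  have b: "smooth bb" unfolding bb_def[abs_def] by (rule smooth_mult[OF smooth_E a])
  have "smooth (\<lambda>t. bb (-t))" using smooth_affine[OF b, of "-1" 0] by simp
  then show ?thesis unfolding bt_def[abs_def] by (rule smooth_diff[OF b])
qed

lemma P_lo: "t \<le> 1/2 \<Longrightarrow> P t = 0" by (simp add: P_def E_nonpos)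
lemma P_hi: "t \<ge> 3/4 \<Longrightarrow> P t = 1"
  using P_den_pos[of t] by (simp add: P_def E_nonpos[of "3/4 - t"])
lemma P_range: "0 \<le> P t \<and> P t \<le> 1"
  using P_den_pos[of t] E_nonneg[of "t - 1/2"] E_nonneg[of "3/4 - t"] by (simp add: P_def)

lemma sg_hi: "t \<ge> 3/4 \<Longrightarrow> sg t = 1" by (simp add: sg_def P_hi P_lo)
lemma sg_lo: "t \<le> -3/4 \<Longrightarrow> sg t = -1" by (simp add: sg_def P_hi P_lo)
lemma sg_mid: "\<bar>t\<bar> \<le> 1/2 \<Longrightarrow> sg t = 0" by (simp add: sg_def P_lo)
lemma sg_sq: "(sg t)^2 \<le> 1"
proof (cases "t \<ge> 0")
  case True then have "sg t = P t" by (simp add: sg_def P_lo)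
  then show ?thesis using P_range[of t] by (simp add: power_le_one abs_le_iff)
next
  case False then have "sg t = - P (-t)" by (simp add: sg_def P_lo)
  then show ?thesis using P_range[of "-t"] by (simp add: power_le_one abs_le_iff)
qed

lemma bb_zero: "t \<le> 0 \<or> t \<ge> 1/2 \<Longrightarrow> bb t = 0" by (auto simp: bb_def E_nonpos)
lemma bt_out: assumes "\<bar>t\<bar> \<ge> 1/2" shows "bt t = 0"
proof -
  have "bb t = 0" "bb (-t) = 0" using assms by (auto intro!: bb_zero)
  then show ?thesis by (simp add: bt_def)
qed
lemma sg_bt: "sg t * bt t = 0"
  by (cases "\<bar>t\<bar> \<le> 1/2") (auto simp: sg_mid bt_out)
lemma bt_pos: "bt (1/4) > 0"
  using E_pos[of "1/4"] by (simp add: bt_def bb_def E_nonpos)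

lemma smooth_integrable: "smooth f \<Longrightarrow> f integrable_on {a..b}"
  by (rule integrable_continuous_real[OF smooth_cont])

lemma odd_integral_zero:
  assumes "smooth f" shows "integral {-a..a} (\<lambda>t. f t - f (-t)) = 0"
proof -
  have "integral {-a..-(-a)} (\<lambda>t. f (-t)) = integral {-a..a} f"
    by (rule Henstock_Kurzweil_Integration.integral_reflect_real)
  then have r: "integral {-a..a} (\<lambda>t. f (-t)) = integral {-a..a} f" by (simp only: minus_minus)
  have "(\<lambda>t. f (-t)) integrable_on {-a..a}"
    using smooth_integrable[OF smooth_affine[OF assms, of "-1" 0]] by simp
  then show ?thesis
    using Henstock_Kurzweil_Integration.integral_diff[OF smooth_integrable[OF assms]] r by simp
qed

lemma int_sg: "integral {-3/4..3/4} sg = 0"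
  using odd_integral_zero[OF smooth_P] by (simp add: sg_def[abs_def])
lemma int_bt: "integral {-3/4..3/4} bt = 0"
proof -
  have a: "smooth (\<lambda>t. E (1/2 - t))" using smooth_E_aff[of "-1" "1/2"] by simp
  have b: "smooth bb" unfolding bb_def[abs_def] by (rule smooth_mult[OF smooth_E a])
  show ?thesis using odd_integral_zero[OF b] by (simp add: bt_def[abs_def])
qed

lemma smooth_sq: "smooth f \<Longrightarrow> smooth (\<lambda>t. (f t)^2)"
  unfolding power2_eq_square by (rule smooth_mult)

lemma int_sg2: "integral {-3/4..3/4} (\<lambda>t. (sg t)^2) \<le> 3/2"
proof -
  have "integral {-3/4..3/4} (\<lambda>t. (sg t)^2) \<le> integral {-3/4..3/4} (\<lambda>t::real. 1::real)"
    by (rule integral_le) (auto intro!: smooth_integrable smooth_sq smooth_sg smooth_const simp: sg_sq)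
  then show ?thesis by simp
qed

lemma int_bt2: "integral {-3/4..3/4} (\<lambda>t. (bt t)^2) > 0"
proof -
  have sm: "smooth (\<lambda>t. (bt t)^2)" unfolding power2_eq_square by (intro smooth_mult smooth_bt)
  have ge: "integral {-3/4..3/4} (\<lambda>t. (bt t)^2) \<ge> 0"
    by (rule integral_nonneg) (auto intro!: smooth_integrable sm)
  have "integral (cbox (-3/4) (3/4)) (\<lambda>t. (bt t)^2) \<noteq> 0"
  proof
    assume "integral (cbox (-3/4) (3/4)) (\<lambda>t. (bt t)^2) = 0"
    then have "\<forall>x\<in>cbox (-3/4) (3/4). (bt x)^2 = 0"
      using integral_cbox_eq_0_iff[of "-3/4" "3/4" "\<lambda>t. (bt t)^2"] smooth_cont[OF sm] by simp
    then show False using bt_pos by simp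
  qed
  with ge show ?thesis by simp
qed


lemma C_inf_from:
  assumes "smooth h" "\<forall>x\<in>S. (G has_real_derivative h x) (at x within S)"
  shows "C_infinity_on S G"
proof -
  obtain D where D: "D 0 = h" "\<And>n x. (D n has_real_derivative D (Suc n) x) (at x)"
    using assms(1) unfolding smooth_def by blast
  define D' where "D' n = (case n of 0 \<Rightarrow> G | Suc k \<Rightarrow> D k)" for n
  have "(D' n has_real_derivative D' (Suc n) x) (at x within S)" if "x \<in> S" for n x
  proof (cases n)
    case 0 then show ?thesis using assms(2) that D(1) by (simp add: D'_def)
  next
    case (Suc k) then show ?thesis using D(2) by (simp add: D'_def has_field_derivative_at_within)
  qed
  then show ?thesis unfolding C_infinity_on_def by (intro exI[of _ D']) (auto simp: D'_def)
qed

lemma ftc_val: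
  assumes "\<forall>x\<in>{-1..1}. (G has_real_derivative h x) (at x within {-1..1::real})"
    "-1 \<le> a" "a \<le> b" "b \<le> 1"
  shows "G b - G a = integral {a..b} h"
proof -
  have "(h has_integral G b - G a) {a..b}"
  proof (rule fundamental_theorem_of_calculus[OF assms(3)])
    fix x assume x: "x \<in> {a..b}"
    then have "(G has_vector_derivative h x) (at x within {-1..1})"
      using assms by (auto simp: has_real_derivative_iff_has_vector_derivative)
    then show "(G has_vector_derivative h x) (at x within {a..b})"
      by (rule has_vector_derivative_within_subset) (use assms in auto)
  qed
  then show ?thesis by (simp add: integral_unique)
qed

lemma int_const_on:
  fixes a b c :: real
  assumes "a \<le> b" "\<And>x. x \<in> {a..b} \<Longrightarrow> h x = c"
  shows "integral {a..b} h = c * (b - a)"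
proof -
  have "integral {a..b} h = integral {a..b} (\<lambda>x. c)" by (rule integral_cong) (use assms in auto)
  then show ?thesis using assms(1) Henstock_Kurzweil_Integration.integral_const_real[of a b c] by (simp add: content_real)
qed

lemma int3:
  assumes "smooth u" "smooth v" "a \<le> b"
  shows "integral {a..b} (\<lambda>t. p + q * u t + r * v t) = p * (b - a) + q * integral {a..b} u + r * integral {a..b} v"
proof -
  have iu: "(\<lambda>t. q * u t) integrable_on {a..b}" and iv: "(\<lambda>t. r * v t) integrable_on {a..b}"
    and ic: "(\<lambda>t. p) integrable_on {a..b}"
    by (auto intro!: smooth_integrable smooth_cmult assms smooth_const)
  have "integral {a..b} (\<lambda>t. p + q * u t + r * v t) = integral {a..b} (\<lambda>t. p + q * u t) + integral {a..b} (\<lambda>t. r * v t)"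
    by (rule Henstock_Kurzweil_Integration.integral_add[OF integrable_add[OF ic iu] iv])
  also have "\<dots> = integral {a..b} (\<lambda>t. p) + integral {a..b} (\<lambda>t. q * u t) + integral {a..b} (\<lambda>t. r * v t)"
    by (simp add: Henstock_Kurzweil_Integration.integral_add[OF ic iu])
  finally show ?thesis using assms(3) by simp
qed

theorem lemma4p3:
  fixes A7 A8 :: real
  shows "\<exists>\<gamma>2 \<gamma>3 :: real \<Rightarrow> real.
     C_infinity_on {-1..1} \<gamma>2 \<and> C_infinity_on {-1..1} \<gamma>3 \<and>
     (\<forall>t\<in>{-1..1}. t \<ge> 3/4 \<longrightarrow> \<gamma>2 t = - (1/2) * A7^2 * t \<and> \<gamma>3 t = A7 * t) \<and>
     (\<forall>t\<in>{-1..1}. t \<le> -3/4 \<longrightarrow> \<gamma>2 t = - (1/2) * A8^2 * t \<and> \<gamma>3 t = A8 * t) \<and>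
     (\<forall>t\<in>{-1..1}. 2 * vector_derivative \<gamma>2 (at t within {-1..1})
                      + (vector_derivative \<gamma>3 (at t within {-1..1}))^2 = 0)"
proof -
  define a where "a = integral {-3/4..3/4} (\<lambda>t. (sg t)^2)"
  define c where "c = integral {-3/4..3/4} (\<lambda>t. (bt t)^2)"
  define lam where "lam = sqrt ((3/2 - a) / c)"
  define s where "s t = sg t + lam * bt t" for t
  define m where "m = (A7 + A8) / 2"
  define d where "d = (A7 - A8) / 2"
  define g where "g t = m + d * s t" for t
  have c_pos: "c > 0" unfolding c_def by (rule int_bt2)
  have a_le: "a \<le> 3/2" unfolding a_def by (rule int_sg2)
  have lam2: "lam^2 = (3/2 - a) / c" unfolding lam_def using c_pos a_le by simp
  have sm_s: "smooth s" unfolding s_def[abs_def] by (intro smooth_add smooth_cmult smooth_sg smooth_bt)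
  have sm_g: "smooth g" unfolding g_def[abs_def] by (intro smooth_add smooth_cmult sm_s smooth_const)
  have sm_g2: "smooth (\<lambda>t. (g t)^2)" by (rule smooth_sq[OF sm_g])
  have s_sq: "(s t)^2 = 0 + 1 * (sg t)^2 + lam^2 * (bt t)^2" for t
  proof -
    have "(s t)^2 = (sg t)^2 + 2 * lam * (sg t * bt t) + lam^2 * (bt t)^2"
      by (simp add: s_def power2_eq_square algebra_simps)
    then show ?thesis by (simp add: sg_bt)
  qed
  have int_s: "integral {-3/4..3/4} s = 0"
  proof -
    have "integral {-3/4..3/4} s = integral {-3/4..3/4} (\<lambda>t. 0 + 1 * sg t + lam * bt t)"
      by (simp add: s_def[abs_def])
    also have "\<dots> = 0" using int_sg int_bt by (subst int3) (auto intro: smooth_sg smooth_bt)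
    finally show ?thesis .
  qed
  have int_s2: "integral {-3/4..3/4} (\<lambda>t. (s t)^2) = 3/2"
  proof -
    have "integral {-3/4..3/4} (\<lambda>t. (s t)^2) = integral {-3/4..3/4} (\<lambda>t. 0 + 1 * (sg t)^2 + lam^2 * (bt t)^2)"
      by (simp only: s_sq)
    also have "\<dots> = a + lam^2 * c"
      by (subst int3) (auto intro: smooth_sq smooth_sg smooth_bt simp: a_def c_def)
    also have "\<dots> = 3/2" using c_pos by (simp add: lam2)
    finally show ?thesis .
  qed
  have int_g: "integral {-3/4..3/4} g = 3/4 * (A7 + A8)"
  proof -
    have "integral {-3/4..3/4} g = integral {-3/4..3/4} (\<lambda>t. m + d * s t + 0 * s t)"
      by (simp add: g_def[abs_def])
    also have "\<dots> = 3/4 * (A7 + A8)"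
      using int_s by (subst int3) (auto intro: sm_s simp: m_def)
    finally show ?thesis .
  qed
  have int_g2: "integral {-3/4..3/4} (\<lambda>t. (g t)^2) = 3/4 * (A7^2 + A8^2)"
  proof -
    have "integral {-3/4..3/4} (\<lambda>t. (g t)^2) = integral {-3/4..3/4} (\<lambda>t. m^2 + (2*m*d) * s t + d^2 * (s t)^2)"
      by (simp add: g_def power2_eq_square algebra_simps)
    also have "\<dots> = m^2 * (3/4 - (-3/4)) + (2*m*d) * integral {-3/4..3/4} s + d^2 * integral {-3/4..3/4} (\<lambda>t. (s t)^2)"
      by (rule int3) (auto intro: sm_s smooth_sq)
    also have "\<dots> = 3/2 * m^2 + 3/2 * d^2" unfolding int_s int_s2 by simp
    also have "\<dots> = 3/4 * (A7^2 + A8^2)" unfolding m_def d_def power2_eq_square by (simp add: field_simps)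
    finally show ?thesis .
  qed
  have g_hi: "g t = A7" if "t \<ge> 3/4" for t
    using that by (simp add: g_def s_def sg_hi bt_out m_def d_def field_simps)
  have g_lo: "g t = A8" if "t \<le> -3/4" for t
    using that by (simp add: g_def s_def sg_lo bt_out m_def d_def field_simps)
  obtain G3 where G3: "\<forall>x\<in>{-1..1}. (G3 has_real_derivative g x) (at x within {-1..1::real})"
    using antiderivative_continuous[OF smooth_cont[OF sm_g]]
    by (metis has_real_derivative_iff_has_vector_derivative)
  obtain G2 where G2: "\<forall>x\<in>{-1..1}. (G2 has_real_derivative (g x)^2) (at x within {-1..1::real})"
    using antiderivative_continuous[OF smooth_cont[OF sm_g2]]
    by (metis has_real_derivative_iff_has_vector_derivative)
  define \<gamma>3 where "\<gamma>3 t = G3 t + (3/4 * A7 - G3 (3/4))" for t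
  define \<gamma>2 where "\<gamma>2 t = -1/2 * G2 t + (-3/8 * A7^2 + 1/2 * G2 (3/4))" for t
  have d3: "(\<gamma>3 has_real_derivative g x) (at x within {-1..1})" if "x \<in> {-1..1}" for x
    unfolding \<gamma>3_def[abs_def] using DERIV_add[OF G3[rule_format, OF that] DERIV_const] by simp
  have d2: "(\<gamma>2 has_real_derivative -1/2 * (g x)^2) (at x within {-1..1})" if "x \<in> {-1..1}" for x
    unfolding \<gamma>2_def[abs_def] using DERIV_add[OF DERIV_cmult[OF G2[rule_format, OF that], of "-1/2"] DERIV_const] by simp
  have C3: "C_infinity_on {-1..1} \<gamma>3" by (rule C_inf_from[OF sm_g]) (use d3 in auto)
  have C2: "C_infinity_on {-1..1} \<gamma>2"
    by (rule C_inf_from[OF smooth_cmult[OF sm_g2, of "-1/2"]]) (use d2 in auto)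
  have mid3: "G3 (3/4) - G3 (-3/4) = 3/4 * (A7 + A8)"
    using ftc_val[OF G3, of "-3/4" "3/4"] int_g by simp
  have mid2: "G2 (3/4) - G2 (-3/4) = 3/4 * (A7^2 + A8^2)"
    using ftc_val[OF G2, of "-3/4" "3/4"] int_g2 by simp
  have hi3: "G3 t - G3 (3/4) = A7 * (t - 3/4)" if "t \<in> {-1..1}" "t \<ge> 3/4" for t
    using ftc_val[OF G3, of "3/4" t] int_const_on[of "3/4" t g A7] g_hi that by simp
  have hi2: "G2 t - G2 (3/4) = A7^2 * (t - 3/4)" if "t \<in> {-1..1}" "t \<ge> 3/4" for t
    using ftc_val[OF G2, of "3/4" t] int_const_on[of "3/4" t "\<lambda>x. (g x)^2" "A7^2"] g_hi that by simp
  have lo3: "G3 (-3/4) - G3 t = A8 * (-3/4 - t)" if "t \<in> {-1..1}" "t \<le> -3/4" for t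
    using ftc_val[OF G3, of t "-3/4"] int_const_on[of t "-3/4" g A8] g_lo that by simp
  have lo2: "G2 (-3/4) - G2 t = A8^2 * (-3/4 - t)" if "t \<in> {-1..1}" "t \<le> -3/4" for t
    using ftc_val[OF G2, of t "-3/4"] int_const_on[of t "-3/4" "\<lambda>x. (g x)^2" "A8^2"] g_lo that by simp
  have vd3: "vector_derivative \<gamma>3 (at t within {-1..1}) = g t" if "t \<in> {-1..1}" for t
    using vector_derivative_within_cbox[of "-1" 1 t \<gamma>3 "g t"] d3[OF that] that
    by (simp add: has_real_derivative_iff_has_vector_derivative)
  have vd2: "vector_derivative \<gamma>2 (at t within {-1..1}) = -1/2 * (g t)^2" if "t \<in> {-1..1}" for t
    using vector_derivative_within_cbox[of "-1" 1 t \<gamma>2 "-1/2 * (g t)^2"] d2[OF that] that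
    by (simp add: has_real_derivative_iff_has_vector_derivative)
  have P1: "\<forall>t\<in>{-1..1}. t \<ge> 3/4 \<longrightarrow> \<gamma>2 t = - (1/2) * A7^2 * t \<and> \<gamma>3 t = A7 * t"
  proof (intro ballI impI)
    fix t :: real assume t: "t \<in> {-1..1}" "t \<ge> 3/4"
    have "\<gamma>2 t = - (1/2) * A7^2 * t" using hi2[OF t] by (simp add: \<gamma>2_def algebra_simps)
    moreover have "\<gamma>3 t = A7 * t" using hi3[OF t] by (simp add: \<gamma>3_def algebra_simps)
    ultimately show "\<gamma>2 t = - (1/2) * A7^2 * t \<and> \<gamma>3 t = A7 * t" ..
  qed
  have P2: "\<forall>t\<in>{-1..1}. t \<le> -3/4 \<longrightarrow> \<gamma>2 t = - (1/2) * A8^2 * t \<and> \<gamma>3 t = A8 * t"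
  proof (intro ballI impI)
    fix t :: real assume t: "t \<in> {-1..1}" "t \<le> -3/4"
    have "\<gamma>2 t = - (1/2) * A8^2 * t" using lo2[OF t] mid2 by (simp add: \<gamma>2_def algebra_simps)
    moreover have "\<gamma>3 t = A8 * t" using lo3[OF t] mid3 by (simp add: \<gamma>3_def algebra_simps)
    ultimately show "\<gamma>2 t = - (1/2) * A8^2 * t \<and> \<gamma>3 t = A8 * t" ..
  qed
  have P3: "\<forall>t\<in>{-1..1}. 2 * vector_derivative \<gamma>2 (at t within {-1..1}) + (vector_derivative \<gamma>3 (at t within {-1..1}))^2 = 0"
    using vd2 vd3 by simp
  show ?thesis using C2 C3 P1 P2 P3 by blast
qed

end
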